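(* Let $S\in\Delta^1_n$. Then $$\phi_S(z)=z^n+\sum_{j=1}^{\lfloor n/2\rfloor}(-1)^j c_{2j}(S)\,z^{n-2j},$$ where $c_{2j}(S)=|\pounds_{2j}|$ is the number of linear subsidigraphs of $S$ of order $2j$.
   Context: A sidigraph is a digraph (no loops, at most one arc from $u$ to $v$) with a sign $\sigma(a)\in\{-1,1\}$ on each arc $a$. Its adjacency matrix $A(S)=(a_{ij})$ has $a_{ij}=\sigma(v_i,v_j)$ if there is an arc from $v_i$ to $v_j$ and $0$ otherwise; $\phi_S(z)=\det(zI-A(S))$. The sign of a directed cycle is the product of the signs of its arcs; the cycle is positive or negative accordingly. A sidigraph is bipartite if its underlying digraph is bipartite. $\Delta^1_n$ is the class of bipartite sidigraphs on $n$ vertices in which every directed cycle of length $\equiv 0\pmod 4$ is negative and every directed cycle of length $\equiv 2\pmod 4$ is positive. A linear subsidigraph of order $k$ is a subsidigraph on $k$ vertices in which every vertex has indegree and outdegree $1$ (a vertex-disjoint union of directed cycles covering those $k$ vertices); $\pounds_k$ is the set of these. *)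

theory Defs
  imports "Jordan_Normal_Form.Char_Poly"
begin

text \<open>A sidigraph on vertex set {0..<n}: arc relation (no loops, at most one arc
  from u to v automatically since arc is a predicate) and a sign sigma on arcs.\<close>

definition sidigraph :: "nat \<Rightarrow> (nat \<Rightarrow> nat \<Rightarrow> bool) \<Rightarrow> (nat \<Rightarrow> nat \<Rightarrow> int) \<Rightarrow> bool" where
  "sidigraph n arc sigma \<longleftrightarrow>
     (\<forall>u v. arc u v \<longrightarrow> u < n \<and> v < n) \<and>
     (\<forall>u. \<not> arc u u) \<and>
     (\<forall>u v. arc u v \<longrightarrow> sigma u v \<in> {-1, 1})"

definition adj_mat :: "nat \<Rightarrow> (nat \<Rightarrow> nat \<Rightarrow> bool) \<Rightarrow> (nat \<Rightarrow> nat \<Rightarrow> int) \<Rightarrow> int mat" where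
  "adj_mat n arc sigma = mat n n (\<lambda>(i, j). if arc i j then sigma i j else 0)"

definition dir_cycle :: "nat \<Rightarrow> (nat \<Rightarrow> nat \<Rightarrow> bool) \<Rightarrow> nat list \<Rightarrow> bool" where
  "dir_cycle n arc cs \<longleftrightarrow> distinct cs \<and> length cs \<ge> 2 \<and> set cs \<subseteq> {0..<n} \<and>
     (\<forall>i < length cs. arc (cs ! i) (cs ! ((i + 1) mod length cs)))"

definition cycle_sign :: "(nat \<Rightarrow> nat \<Rightarrow> int) \<Rightarrow> nat list \<Rightarrow> int" where
  "cycle_sign sigma cs = (\<Prod>i < length cs. sigma (cs ! i) (cs ! ((i + 1) mod length cs)))"

definition bipartite_sd :: "nat \<Rightarrow> (nat \<Rightarrow> nat \<Rightarrow> bool) \<Rightarrow> bool" where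
  "bipartite_sd n arc \<longleftrightarrow> (\<exists>X. \<forall>u < n. \<forall>v < n. arc u v \<longrightarrow> (u \<in> X \<longleftrightarrow> v \<notin> X))"

definition Delta1 :: "nat \<Rightarrow> (nat \<Rightarrow> nat \<Rightarrow> bool) \<Rightarrow> (nat \<Rightarrow> nat \<Rightarrow> int) \<Rightarrow> bool" where
  "Delta1 n arc sigma \<longleftrightarrow> sidigraph n arc sigma \<and> bipartite_sd n arc \<and>
     (\<forall>cs. dir_cycle n arc cs \<longrightarrow>
        (length cs mod 4 = 0 \<longrightarrow> cycle_sign sigma cs = -1) \<and>
        (length cs mod 4 = 2 \<longrightarrow> cycle_sign sigma cs = 1))"

text \<open>A linear subsidigraph is determined by its arc set L (signs are inherited);
  its vertex set is the set of endpoints, and each of these has in- and outdegree 1 in L.\<close>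
definition sd_verts :: "(nat \<times> nat) set \<Rightarrow> nat set" where
  "sd_verts L = fst ` L \<union> snd ` L"

definition linear_subsidigraph :: "nat \<Rightarrow> (nat \<Rightarrow> nat \<Rightarrow> bool) \<Rightarrow> (nat \<times> nat) set \<Rightarrow> bool" where
  "linear_subsidigraph n arc L \<longleftrightarrow>
     L \<subseteq> {(u, v). u < n \<and> v < n \<and> arc u v} \<and>
     (\<forall>v \<in> sd_verts L. card {w. (v, w) \<in> L} = 1 \<and> card {u. (u, v) \<in> L} = 1)"

definition lin_count :: "nat \<Rightarrow> (nat \<Rightarrow> nat \<Rightarrow> bool) \<Rightarrow> nat \<Rightarrow> nat" where
  "lin_count n arc k = card {L. linear_subsidigraph n arc L \<and> card (sd_verts L) = k}"

end

theory Submission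
  imports Defs "HOL-Combinatorics.Cycles"
begin


lemma sign_cycle_of_list: "distinct cs \<Longrightarrow> sign (cycle_of_list cs) = (-1) ^ (length cs - 1)"
proof (induction cs rule: cycle_of_list.induct)
  case (1 i j cs)
  have "sign (cycle_of_list (i # j # cs)) = sign (transpose i j) * sign (cycle_of_list (j # cs))"
    by (simp add: sign_compose permutation_swap_id permutation_of_cycle)
  also have "\<dots> = - ((-1) ^ (length (j # cs) - 1))" using 1 by (simp add: sign_swap_id)
  also have "\<dots> = (-1) ^ (length (i # j # cs) - 1)" by simp
  finally show ?case .
qed auto

lemma cd_permutes: "cycle_decomp I p \<Longrightarrow> p permutes I"
proof (induction rule: cycle_decomp.induct)
  case empty then show ?case by (auto simp: permutes_def)
next
  case (comp I p cs)
  have "cycle_of_list cs permutes (set cs \<union> I)"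
    by (rule permutes_subset[OF cycle_permutes]) auto
  moreover have "p permutes (set cs \<union> I)" by (rule permutes_subset[OF comp.IH]) auto
  ultimately show ?case by (rule permutes_compose[rotated])
qed

lemma bip_even:
  assumes D: "Delta1 n arc sigma" and C: "dir_cycle n arc cs"
  shows "even (length cs)"
proof (rule ccontr)
  assume odd: "odd (length cs)"
  from D obtain X where X: "\<forall>u < n. \<forall>v < n. arc u v \<longrightarrow> (u \<in> X \<longleftrightarrow> v \<notin> X)"
    unfolding Delta1_def bipartite_sd_def by blast
  let ?l = "length cs"
  from C have l2: "?l \<ge> 2" and sub: "set cs \<subseteq> {0..<n}"
    and arcs: "\<forall>i < ?l. arc (cs ! i) (cs ! ((i + 1) mod ?l))"
    unfolding dir_cycle_def by auto
  have lt: "i < ?l \<Longrightarrow> cs ! i < n" for i using sub nth_mem by fastforce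
  have claim: "i < ?l \<Longrightarrow> ((cs ! i \<in> X) \<longleftrightarrow> (cs ! 0 \<in> X)) \<longleftrightarrow> even i" for i
  proof (induction i)
    case 0 then show ?case by simp
  next
    case (Suc i)
    then have "arc (cs ! i) (cs ! (Suc i))" using arcs[rule_format, of i] by simp
    then have "cs ! i \<in> X \<longleftrightarrow> cs ! Suc i \<notin> X" using X lt Suc.prems by auto
    then show ?case using Suc by auto
  qed
  have lpos: "0 < ?l" "?l - 1 < ?l" using l2 by linarith+
  have "Suc (?l - 1) = ?l" using l2 by simp
  then have a: "arc (cs ! (?l - 1)) (cs ! 0)" using arcs[rule_format, of "?l - 1"] l2 by simp
  have b: "cs ! (?l - 1) < n" "cs ! 0 < n" using lt lpos by blast+
  have c: "cs ! (?l - 1) \<in> X \<longleftrightarrow> cs ! 0 \<notin> X" using X a b by blast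
  have "even (?l - 1)" using odd l2 by simp
  then show False using claim[OF lpos(2)] c by blast
qed


lemma arith_aux:
  fixes s :: int
  assumes "even l" "l \<ge> 2" "even m" "l mod 4 = 0 \<Longrightarrow> s = -1" "l mod 4 = 2 \<Longrightarrow> s = 1"
  shows "(-1::int) ^ (l - 1) * ((-1) ^ l * s) * (-1) ^ (m div 2) = (-1) ^ ((l + m) div 2)"
proof -
  obtain a where a: "l = 2 * a" using assms(1) by blast
  obtain b where b: "m = 2 * b" using assms(3) by blast
  have a1: "a \<ge> 1" using a assms(2) by simp
  have o: "odd (l - 1)" using a a1 by simp
  have e1: "(-1::int) ^ (l - 1) = -1" using o by simp
  have e2: "(-1::int) ^ l = 1" using assms(1) by simp
  have lm: "(l + m) div 2 = a + b" using a b by simp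
  show ?thesis
  proof (cases "even a")
    case True
    then have "l mod 4 = 0" using a by presburger
    then have "s = -1" using assms(4) by simp
    then show ?thesis using e1 e2 lm b True by (simp add: power_add)
  next
    case False
    then have "l mod 4 = 2" using a by presburger
    then have "s = 1" using assms(5) by simp
    then show ?thesis using e1 e2 lm b False by (simp add: power_add)
  qed
qed

lemma prod_neg_lessThan:
  fixes f :: "nat \<Rightarrow> int"
  shows "(\<Prod>k<l. - f k) = (-1) ^ l * (\<Prod>k<l. f k)"
  by (induction l) auto

lemma key:
  assumes D: "Delta1 n arc sigma"
  shows "cycle_decomp I p \<Longrightarrow> I \<subseteq> {0..<n} \<Longrightarrow> (\<forall>i. p i \<noteq> i \<longrightarrow> arc i (p i)) \<Longrightarrow>
    even (card {i. p i \<noteq> i}) \<and>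
    sign p * (\<Prod>i\<in>{i. p i \<noteq> i}. - sigma i (p i)) = (-1) ^ (card {i. p i \<noteq> i} div 2)"
proof (induction rule: cycle_decomp.induct)
  case empty
  then show ?case by simp
next
  case (comp I q cs)
  define c where "c = cycle_of_list cs"
  define P where "P = c \<circ> q"
  have Peq: "cycle_of_list cs \<circ> q = P" using P_def c_def by simp
  have qp: "q permutes I" by (rule cd_permutes) fact
  have arcsP: "\<forall>i. P i \<noteq> i \<longrightarrow> arc i (P i)" using comp.prems(2) Peq by simp
  have fin: "finite I" using comp.prems(1) finite_subset by blast
  have mvq: "{i. q i \<noteq> i} \<subseteq> I" using qp by (auto simp: permutes_def)
  have P_I: "P i = q i" if "i \<in> I" for i
  proof -
    have "q i \<in> I" using qp that by (simp add: permutes_in_image)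
    then have "q i \<notin> set cs" using comp.hyps(3) by blast
    then show ?thesis unfolding P_def c_def by (simp add: id_outside_supp)
  qed
  have P_cs: "P i = c i" if "i \<in> set cs" for i
  proof -
    have "i \<notin> I" using comp.hyps(3) that by blast
    then have "q i = i" using qp by (simp add: permutes_not_in)
    then show ?thesis unfolding P_def by simp
  qed
  have P_out: "P i = i" if "i \<notin> I" "i \<notin> set cs" for i
  proof -
    have "q i = i" using qp that by (simp add: permutes_not_in)
    then show ?thesis unfolding P_def c_def using that by (simp add: id_outside_supp)
  qed
  have arcsq: "\<forall>i. q i \<noteq> i \<longrightarrow> arc i (q i)"
  proof (intro allI impI)
    fix i assume "q i \<noteq> i"
    then have "i \<in> I" using mvq by blast
    then show "arc i (q i)" using arcsP P_I \<open>q i \<noteq> i\<close> by metis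
  qed
  have IH: "even (card {i. q i \<noteq> i}) \<and>
    sign q * (\<Prod>i\<in>{i. q i \<noteq> i}. - sigma i (q i)) = (-1) ^ (card {i. q i \<noteq> i} div 2)"
    using comp.IH comp.prems(1) arcsq by blast
  show ?case
  proof (cases "length cs < 2")
    case True
    then have "c = id" unfolding c_def by (cases cs rule: cycle_of_list.cases) auto
    then have "P = q" unfolding P_def by simp
    then show ?thesis using IH Peq by simp
  next
    case False
    define l where "l = length cs"
    have l2: "l \<ge> 2" using False l_def by simp
    have dist: "distinct cs" using comp.hyps(2) .
    have rot: "c (cs ! k) = cs ! ((k + 1) mod l)" if "k < l" for k
    proof -
      have "map (c ^^ 1) cs = rotate 1 cs" unfolding c_def by (rule cyclic_rotation[OF dist])
      then have "map c cs ! k = rotate 1 cs ! k" by simp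
      then show ?thesis using that l_def by (simp add: nth_rotate1)
    qed
    have mov: "c (cs ! k) \<noteq> cs ! k" if "k < l" for k
    proof -
      have "(k + 1) mod l \<noteq> k"
      proof (cases "k + 1 < l")
        case True then show ?thesis by simp
      next
        case False then have "k + 1 = l" using that by simp
        then show ?thesis using l2 by simp
      qed
      moreover have "(k + 1) mod l < l" using l2 by simp
      ultimately show ?thesis using rot[OF that] dist that l_def by (simp add: nth_eq_iff_index_eq)
    qed
    have setcs: "set cs = (\<lambda>k. cs ! k) ` {..<l}" using l_def by (auto simp: set_conv_nth)
    have mvP: "{i. P i \<noteq> i} = set cs \<union> {i. q i \<noteq> i}"
    proof
      show "{i. P i \<noteq> i} \<subseteq> set cs \<union> {i. q i \<noteq> i}"
      proof
        fix i assume "i \<in> {i. P i \<noteq> i}"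
        then show "i \<in> set cs \<union> {i. q i \<noteq> i}" using P_I P_out by (cases "i \<in> I") fastforce+
      qed
    next
      show "set cs \<union> {i. q i \<noteq> i} \<subseteq> {i. P i \<noteq> i}"
      proof
        fix i assume i: "i \<in> set cs \<union> {i. q i \<noteq> i}"
        show "i \<in> {i. P i \<noteq> i}"
        proof (cases "i \<in> set cs")
          case True
          then obtain k where k: "k < l" "i = cs ! k" using setcs by auto
          then show ?thesis using mov P_cs True by auto
        next
          case False
          then have "q i \<noteq> i" using i by blast
          then have "i \<in> I" using mvq by blast
          then show ?thesis using P_I \<open>q i \<noteq> i\<close> by simp
        qed
      qed
    qed
    have disj: "set cs \<inter> {i. q i \<noteq> i} = {}" using mvq comp.hyps(3) by blast
    have finq: "finite {i. q i \<noteq> i}" using mvq fin finite_subset by blast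
    have dc: "dir_cycle n arc cs"
      unfolding dir_cycle_def
    proof (intro conjI allI impI)
      show "distinct cs" by fact
      show "2 \<le> length cs" using l2 l_def by simp
      show "set cs \<subseteq> {0..<n}" using comp.prems(1) by blast
      fix k assume k: "k < length cs"
      have "P (cs ! k) = cs ! ((k + 1) mod length cs)" using P_cs rot k l_def by simp
      moreover have "P (cs ! k) \<noteq> cs ! k" using P_cs mov k l_def by simp
      ultimately show "arc (cs ! k) (cs ! ((k + 1) mod length cs))" using arcsP by metis
    qed
    have evl: "even l" using bip_even[OF D dc] l_def by simp
    have s4: "l mod 4 = 0 \<Longrightarrow> cycle_sign sigma cs = -1" "l mod 4 = 2 \<Longrightarrow> cycle_sign sigma cs = 1"
      using D dc l_def unfolding Delta1_def by auto
    have prod_cs: "(\<Prod>i\<in>set cs. - sigma i (P i)) = (-1) ^ l * cycle_sign sigma cs"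
    proof -
      have inj: "inj_on (\<lambda>k. cs ! k) {..<l}" using dist l_def by (simp add: inj_on_nth)
      have "(\<Prod>i\<in>set cs. - sigma i (P i)) = (\<Prod>k<l. - sigma (cs ! k) (P (cs ! k)))"
        unfolding setcs by (simp add: prod.reindex[OF inj])
      also have "\<dots> = (\<Prod>k<l. - sigma (cs ! k) (cs ! ((k + 1) mod l)))"
      proof (rule prod.cong[OF refl])
        fix k assume "k \<in> {..<l}"
        then have "k < l" "cs ! k \<in> set cs" using l_def by auto
        then show "- sigma (cs ! k) (P (cs ! k)) = - sigma (cs ! k) (cs ! ((k + 1) mod l))"
          using P_cs rot by simp
      qed
      also have "\<dots> = (-1) ^ l * cycle_sign sigma cs"
        unfolding cycle_sign_def l_def by (rule prod_neg_lessThan)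
      finally show ?thesis .
    qed
    have permq: "permutation q" using qp fin permutation_permutes by blast
    have signP: "sign P = (-1) ^ (l - 1) * sign q"
      unfolding P_def using sign_compose[OF permutation_of_cycle permq] sign_cycle_of_list[OF dist]
      c_def l_def by simp
    have cardP: "card {i. P i \<noteq> i} = l + card {i. q i \<noteq> i}"
      unfolding mvP using card_Un_disjoint[OF _ finq disj] distinct_card[OF dist] l_def by simp
    have prodP: "(\<Prod>i\<in>{i. P i \<noteq> i}. - sigma i (P i)) =
        (\<Prod>i\<in>set cs. - sigma i (P i)) * (\<Prod>i\<in>{i. q i \<noteq> i}. - sigma i (q i))"
    proof -
      have "(\<Prod>i\<in>{i. q i \<noteq> i}. - sigma i (P i)) = (\<Prod>i\<in>{i. q i \<noteq> i}. - sigma i (q i))"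
      proof (rule prod.cong[OF refl])
        fix i assume "i \<in> {i. q i \<noteq> i}"
        then have "i \<in> I" using mvq by blast
        then show "- sigma i (P i) = - sigma i (q i)" using P_I by simp
      qed
      then show ?thesis unfolding mvP by (simp add: prod.union_disjoint[OF _ finq disj])
    qed
    have "sign P * (\<Prod>i\<in>{i. P i \<noteq> i}. - sigma i (P i)) =
       (-1) ^ (l - 1) * ((-1) ^ l * cycle_sign sigma cs) * (sign q * (\<Prod>i\<in>{i. q i \<noteq> i}. - sigma i (q i)))"
      unfolding prodP signP prod_cs by (simp add: algebra_simps)
    also have "\<dots> = (-1) ^ (card {i. P i \<noteq> i} div 2)"
      unfolding cardP using IH arith_aux[OF evl l2 _ s4] by simp
    finally show ?thesis unfolding Peq using cardP evl IH by simp
  qed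
qed



lemma prod_monom: "finite A \<Longrightarrow> (\<Prod>i\<in>A. monom (c i) (d i)) = monom (\<Prod>i\<in>A. c i) (\<Sum>i\<in>A. d i)"
  by (induction A rule: finite_induct) (auto simp: mult_monom)

lemma cpm_entry:
  assumes S: "sidigraph n arc sigma" and i: "i < n" and j: "j < n"
  shows "char_poly_matrix (adj_mat n arc sigma) $$ (i, j) =
    (if i = j then monom 1 1 else monom (- (if arc i j then sigma i j else 0)) 0)"
proof -
  have noloop: "\<not> arc i i" using S unfolding sidigraph_def by blast
  show ?thesis using i j noloop
    by (auto simp: char_poly_matrix_def adj_mat_def monom_0 monom_Suc)
qed

lemma key_perm:
  assumes D: "Delta1 n arc sigma" and p: "p permutes {0..<n}" and v: "\<forall>i. p i \<noteq> i \<longrightarrow> arc i (p i)"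
  shows "even (card {i. p i \<noteq> i}) \<and>
    sign p * (\<Prod>i\<in>{i. p i \<noteq> i}. - sigma i (p i)) = (-1) ^ (card {i. p i \<noteq> i} div 2)"
  using key[OF D cycle_decomposition[OF p finite_atLeastLessThan]] v by blast

lemma term_eq:
  assumes D: "Delta1 n arc sigma" and p: "p permutes {0..<n}"
  shows "signof p * (\<Prod>i = 0..<n. char_poly_matrix (adj_mat n arc sigma) $$ (i, p i)) =
    (if (\<forall>i. p i \<noteq> i \<longrightarrow> arc i (p i))
     then monom ((-1) ^ (card {i. p i \<noteq> i} div 2)) (n - card {i. p i \<noteq> i}) else 0)"
proof -
  have S: "sidigraph n arc sigma" using D unfolding Delta1_def by blast
  define c where "c i = (if p i = i then 1 else - (if arc i (p i) then sigma i (p i) else 0))" for i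
  define d where "d i = (if p i = i then 1 else 0 :: nat)" for i
  define M where "M = {i. p i \<noteq> i}"
  have Msub: "M \<subseteq> {0..<n}" using p unfolding M_def by (auto simp: permutes_def)
  have finM: "finite M" using Msub finite_subset by blast
  have pin: "i < n \<Longrightarrow> p i < n" for i using p by (simp add: permutes_in_image)
  have "(\<Prod>i = 0..<n. char_poly_matrix (adj_mat n arc sigma) $$ (i, p i)) =
      (\<Prod>i = 0..<n. monom (c i) (d i))"
    by (rule prod.cong[OF refl]) (auto simp: cpm_entry[OF S] pin c_def d_def)
  also have "\<dots> = monom (\<Prod>i = 0..<n. c i) (\<Sum>i = 0..<n. d i)" by (rule prod_monom) simp
  also have "(\<Sum>i = 0..<n. d i) = n - card M"
  proof -
    have "(\<Sum>i = 0..<n. d i) = card {i \<in> {0..<n}. p i = i}"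
      unfolding d_def by (simp add: sum.If_cases Int_def)
    also have "{i \<in> {0..<n}. p i = i} = {0..<n} - M" unfolding M_def by auto
    also have "card ({0..<n} - M) = n - card M" using Msub finM by (simp add: card_Diff_subset)
    finally show ?thesis .
  qed
  also have "(\<Prod>i = 0..<n. c i) = (\<Prod>i\<in>M. c i)"
    by (rule prod.mono_neutral_right[OF _ Msub]) (auto simp: c_def M_def)
  finally have prodeq: "(\<Prod>i = 0..<n. char_poly_matrix (adj_mat n arc sigma) $$ (i, p i)) =
      monom (\<Prod>i\<in>M. c i) (n - card M)" .
  have lhs: "signof p * (\<Prod>i = 0..<n. char_poly_matrix (adj_mat n arc sigma) $$ (i, p i)) =
     monom (sign p * (\<Prod>i\<in>M. c i)) (n - card M)"
    unfolding prodeq by (simp add: of_int_monom mult_monom)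
  show ?thesis
  proof (cases "\<forall>i. p i \<noteq> i \<longrightarrow> arc i (p i)")
    case True
    have "(\<Prod>i\<in>M. c i) = (\<Prod>i\<in>M. - sigma i (p i))"
      by (rule prod.cong[OF refl]) (use True in \<open>auto simp: c_def M_def\<close>)
    then show ?thesis using lhs key_perm[OF D p True] True unfolding M_def by simp
  next
    case False
    then obtain i where i: "p i \<noteq> i" "\<not> arc i (p i)" by blast
    have z: "(\<Prod>i\<in>M. c i) = 0" using i finM by (intro prod_zero) (auto simp: c_def M_def intro!: bexI[of _ i])
    show ?thesis by (subst lhs) (simp add: z False)
  qed
qed



definition phiL :: "(nat \<Rightarrow> nat) \<Rightarrow> (nat \<times> nat) set" where
  "phiL p = (\<lambda>i. (i, p i)) ` {i. p i \<noteq> i}"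

definition psiL :: "(nat \<times> nat) set \<Rightarrow> nat \<Rightarrow> nat" where
  "psiL L i = (if i \<in> fst ` L then (THE w. (i, w) \<in> L) else i)"

lemma phiL_inj: "phiL p = phiL q \<Longrightarrow> p = q"
proof (rule ext)
  fix i assume eq: "phiL p = phiL q"
  show "p i = q i"
  proof (cases "p i \<noteq> i")
    case True
    then have "(i, p i) \<in> phiL q" using eq unfolding phiL_def by auto
    then show ?thesis unfolding phiL_def by auto
  next
    case False
    show ?thesis
    proof (cases "q i \<noteq> i")
      case True
      then have "(i, q i) \<in> phiL p" using eq unfolding phiL_def by auto
      then show ?thesis unfolding phiL_def by auto
    next
      case False2: False
      then show ?thesis using False by simp
    qed
  qed
qed

lemma phiL_props:
  assumes p: "p permutes {0..<n}" and v: "\<forall>i. p i \<noteq> i \<longrightarrow> arc i (p i)"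
  shows "sd_verts (phiL p) = {i. p i \<noteq> i}" and "linear_subsidigraph n arc (phiL p)"
proof -
  have mv: "p i \<noteq> i \<Longrightarrow> p (p i) \<noteq> p i" for i
    using permutes_inj[OF p] by (metis injD)
  show sv: "sd_verts (phiL p) = {i. p i \<noteq> i}"
    unfolding sd_verts_def phiL_def using mv by (auto simp: image_image)
  show "linear_subsidigraph n arc (phiL p)"
    unfolding linear_subsidigraph_def
  proof (intro conjI ballI)
    show "phiL p \<subseteq> {(u, v). u < n \<and> v < n \<and> arc u v}"
    proof
      fix x assume "x \<in> phiL p"
      then obtain i where i: "x = (i, p i)" "p i \<noteq> i" unfolding phiL_def by auto
      have "i \<in> {0..<n}" using i(2) p by (meson permutes_not_in)
      then have "i < n" "p i < n" using p by (auto simp: permutes_in_image)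
      then show "x \<in> {(u, v). u < n \<and> v < n \<and> arc u v}" using i v by auto
    qed
  next
    fix w assume "w \<in> sd_verts (phiL p)"
    then have w: "p w \<noteq> w" using sv by simp
    have "{x. (w, x) \<in> phiL p} = {p w}" using w unfolding phiL_def by auto
    then show "card {x. (w, x) \<in> phiL p} = 1" by simp
    obtain u where u: "p u = w" using permutes_surj[OF p] by (metis surjD)
    have "u \<noteq> w" using u w by auto
    have "{x. (x, w) \<in> phiL p} = {u}"
    proof
      show "{u} \<subseteq> {x. (x, w) \<in> phiL p}" using u \<open>u \<noteq> w\<close> unfolding phiL_def by auto
      show "{x. (x, w) \<in> phiL p} \<subseteq> {u}"
        using u permutes_inj[OF p] unfolding phiL_def by (auto dest: injD)
    qed
    then show "card {x. (x, w) \<in> phiL p} = 1" by simp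
  qed
qed

lemma psiL_props:
  assumes D: "Delta1 n arc sigma" and L: "linear_subsidigraph n arc L"
  shows "psiL L permutes {0..<n}" and "\<forall>i. psiL L i \<noteq> i \<longrightarrow> arc i (psiL L i)"
    and "phiL (psiL L) = L"
proof -
  have S: "sidigraph n arc sigma" using D unfolding Delta1_def by blast
  have noloop: "\<not> arc i i" for i using S unfolding sidigraph_def by blast
  have Lsub: "L \<subseteq> {(u, v). u < n \<and> v < n \<and> arc u v}" and
    deg: "\<And>v. v \<in> sd_verts L \<Longrightarrow> card {w. (v, w) \<in> L} = 1 \<and> card {u. (u, v) \<in> L} = 1"
    using L unfolding linear_subsidigraph_def by auto
  define F where "F = fst ` L"
  have FV: "F = sd_verts L"
  proof
    show "F \<subseteq> sd_verts L" unfolding F_def sd_verts_def by auto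
    show "sd_verts L \<subseteq> F"
    proof
      fix v assume "v \<in> sd_verts L"
      then have "card {w. (v, w) \<in> L} = 1" using deg by blast
      then obtain w where "{w'. (v, w') \<in> L} = {w}" by (rule card_1_singletonE)
      then have "(v, w) \<in> L" by auto
      then show "v \<in> F" unfolding F_def by force
    qed
  qed
  have succ: "(v, psiL L v) \<in> L \<and> (\<forall>w. (v, w) \<in> L \<longrightarrow> w = psiL L v)" if "v \<in> F" for v
  proof -
    have "card {w. (v, w) \<in> L} = 1" using deg that FV by blast
    then obtain w0 where w0: "{w'. (v, w') \<in> L} = {w0}" by (rule card_1_singletonE)
    then have uq: "(v, w) \<in> L \<longleftrightarrow> w = w0" for w by blast
    have "psiL L v = w0" using that uq unfolding psiL_def F_def by auto
    then show ?thesis using uq by auto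
  qed
  have succ1: "v \<in> F \<Longrightarrow> (v, psiL L v) \<in> L" for v using succ by blast
  have succ2: "v \<in> F \<Longrightarrow> (v, w) \<in> L \<Longrightarrow> psiL L v = w" for v w using succ by metis
  have mvF: "psiL L i \<noteq> i \<longleftrightarrow> i \<in> F" for i
  proof
    assume "i \<in> F"
    then have "(i, psiL L i) \<in> L" by (rule succ1)
    then have "arc i (psiL L i)" using Lsub by auto
    then show "psiL L i \<noteq> i" using noloop by metis
  next
    assume "psiL L i \<noteq> i" then show "i \<in> F" unfolding psiL_def F_def by (auto split: if_splits)
  qed
  show "\<forall>i. psiL L i \<noteq> i \<longrightarrow> arc i (psiL L i)"
  proof (intro allI impI)
    fix i assume "psiL L i \<noteq> i"
    then have "i \<in> F" by (rule mvF[THEN iffD1])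
    then have "(i, psiL L i) \<in> L" by (rule succ1)
    then show "arc i (psiL L i)" using Lsub by auto
  qed
  show "phiL (psiL L) = L"
  proof
    show "phiL (psiL L) \<subseteq> L" unfolding phiL_def using mvF succ1 by auto
    show "L \<subseteq> phiL (psiL L)"
    proof
      fix x assume x: "x \<in> L"
      obtain u w where uw: "x = (u, w)" by fastforce
      have uF: "u \<in> F" using x uw unfolding F_def by force
      then have "w = psiL L u" using succ2[OF uF] x uw by simp
      then show "x \<in> phiL (psiL L)" unfolding phiL_def using uw uF mvF by auto
    qed
  qed
  have fixF: "i \<notin> F \<Longrightarrow> psiL L i = i" for i unfolding psiL_def F_def by simp
  have Fn: "i \<in> F \<Longrightarrow> i < n" for i using Lsub unfolding F_def by auto
  have sndF: "(x, y) \<in> L \<Longrightarrow> y \<in> F" for x y using FV unfolding sd_verts_def by force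
  show "psiL L permutes {0..<n}"
    unfolding permutes_def
  proof (intro conjI allI impI)
    fix x assume "x \<notin> {0..<n}"
    then have "x \<notin> F" using Fn by auto
    then show "psiL L x = x" using fixF by blast
  next
    fix y
    show "\<exists>!x. psiL L x = y"
    proof (cases "y \<in> F")
      case True
      then have "card {u. (u, y) \<in> L} = 1" using deg FV by blast
      then obtain u0 where u0: "{u. (u, y) \<in> L} = {u0}" by (rule card_1_singletonE)
      have u0L: "(u0, y) \<in> L" using u0 by auto
      have u0F: "u0 \<in> F" using u0L unfolding F_def by force
      have "psiL L u0 = y" using succ2[OF u0F u0L] .
      moreover have "x = u0" if "psiL L x = y" for x
      proof (cases "x \<in> F")
        case True
        then have "(x, y) \<in> L" using succ1[OF True] that by simp
        then show ?thesis using u0 by auto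
      next
        case False
        then have "psiL L x = x" using fixF by blast
        then show ?thesis using that False True by simp
      qed
      ultimately show ?thesis by blast
    next
      case False
      have "psiL L y = y" using False fixF by blast
      moreover have "x = y" if "psiL L x = y" for x
      proof (cases "x \<in> F")
        case True
        then have "(x, y) \<in> L" using succ1[OF True] that by simp
        then show ?thesis using sndF False by blast
      next
        case False
        then show ?thesis using fixF that by metis
      qed
      ultimately show ?thesis by blast
    qed
  qed
qed



lemma sd_verts_sub: "linear_subsidigraph n arc L \<Longrightarrow> sd_verts L \<subseteq> {0..<n}"
  unfolding linear_subsidigraph_def sd_verts_def by force

lemma lin_count_0: "lin_count n arc 0 = 1"
proof -
  have "{L. linear_subsidigraph n arc L \<and> card (sd_verts L) = 0} = {{}}"
  proof
    show "{L. linear_subsidigraph n arc L \<and> card (sd_verts L) = 0} \<subseteq> {{}}"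
    proof
      fix L assume L: "L \<in> {L. linear_subsidigraph n arc L \<and> card (sd_verts L) = 0}"
      then have "finite (sd_verts L)" using sd_verts_sub[of n arc L] finite_subset by blast
      then have "sd_verts L = {}" using L by simp
      then have "L = {}" unfolding sd_verts_def by auto
      then show "L \<in> {{}}" by simp
    qed
    show "{{}} \<subseteq> {L. linear_subsidigraph n arc L \<and> card (sd_verts L) = 0}"
      by (simp add: linear_subsidigraph_def sd_verts_def)
  qed
  then show ?thesis unfolding lin_count_def by simp
qed

theorem theorem2p5:
  fixes n :: nat and arc :: "nat \<Rightarrow> nat \<Rightarrow> bool" and sigma :: "nat \<Rightarrow> nat \<Rightarrow> int"
  assumes "Delta1 n arc sigma"
  shows "char_poly (adj_mat n arc sigma) =
           monom 1 n + (\<Sum>j = 1..n div 2. monom ((-1) ^ j * int (lin_count n arc (2 * j))) (n - 2 * j))"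
proof -
  note D = assms
  define A where "A = adj_mat n arc sigma"
  have Acar: "A \<in> carrier_mat n n" unfolding A_def adj_mat_def by simp
  define val where "val p \<longleftrightarrow> (\<forall>i. p i \<noteq> i \<longrightarrow> arc i (p i))" for p :: "nat \<Rightarrow> nat"
  define g where "g L = monom ((-1::int) ^ (card (sd_verts L) div 2)) (n - card (sd_verts L))" for L
  define P where "P = {p. p permutes {0..<n}}"
  define V where "V = {p \<in> P. val p}"
  define LS where "LS = {L. linear_subsidigraph n arc L}"
  have finP: "finite P" unfolding P_def by (rule finite_permutations) simp
  have "char_poly A = (\<Sum>p\<in>P. signof p * (\<Prod>i = 0..<n. char_poly_matrix A $$ (i, p i)))"
    unfolding char_poly_def P_def by (rule det_def'[OF char_poly_matrix_closed[OF Acar]])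
  also have "\<dots> = (\<Sum>p\<in>P. if val p then g (phiL p) else 0)"
  proof (rule sum.cong[OF refl])
    fix p assume "p \<in> P"
    then have p: "p permutes {0..<n}" unfolding P_def by simp
    show "signof p * (\<Prod>i = 0..<n. char_poly_matrix A $$ (i, p i)) = (if val p then g (phiL p) else 0)"
    proof (cases "val p")
      case True
      then have "sd_verts (phiL p) = {i. p i \<noteq> i}" using phiL_props(1)[OF p] val_def by blast
      then show ?thesis using term_eq[OF D p] True unfolding A_def val_def g_def by simp
    next
      case False
      then have nv: "\<not> (\<forall>i. p i \<noteq> i \<longrightarrow> arc i (p i))" unfolding val_def by simp
      have t: "signof p * (\<Prod>i = 0..<n. char_poly_matrix A $$ (i, p i)) =
        (if (\<forall>i. p i \<noteq> i \<longrightarrow> arc i (p i))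
         then monom ((-1) ^ (card {i. p i \<noteq> i} div 2)) (n - card {i. p i \<noteq> i}) else 0)"
        unfolding A_def by (rule term_eq[OF D p])
      show ?thesis unfolding t using nv False by (simp only: if_False)
    qed
  qed
  also have "\<dots> = (\<Sum>p\<in>V. g (phiL p))" unfolding V_def by (simp add: sum.inter_filter[OF finP])
  also have "\<dots> = (\<Sum>L\<in>LS. g L)"
  proof (rule sum.reindex_bij_betw)
    show "bij_betw phiL V LS"
      unfolding bij_betw_def
    proof
      show "inj_on phiL V" by (auto intro: inj_onI phiL_inj)
      show "phiL ` V = LS"
      proof
        show "phiL ` V \<subseteq> LS" unfolding V_def P_def LS_def val_def using phiL_props(2) by blast
        show "LS \<subseteq> phiL ` V"
        proof
          fix L assume "L \<in> LS"
          then have L: "linear_subsidigraph n arc L" unfolding LS_def by simp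
          have "psiL L \<in> V" unfolding V_def P_def val_def using psiL_props(1,2)[OF D L] by simp
          then show "L \<in> phiL ` V" using psiL_props(3)[OF D L] by force
        qed
      qed
    qed
  qed
  also have "\<dots> = (\<Sum>j = 0..n div 2. monom ((-1) ^ j * int (lin_count n arc (2 * j))) (n - 2 * j))"
  proof -
    have evLS: "even (card (sd_verts L)) \<and> card (sd_verts L) \<le> n" if "L \<in> LS" for L
    proof -
      have L: "linear_subsidigraph n arc L" using that unfolding LS_def by simp
      have "sd_verts L = {i. psiL L i \<noteq> i}"
        using phiL_props(1)[where p="psiL L" and n=n and arc=arc, OF psiL_props(1)[OF D L] psiL_props(2)[OF D L]] psiL_props(3)[OF D L] by simp
      then have "even (card (sd_verts L))" using key_perm[where p="psiL L", OF D psiL_props(1)[OF D L] psiL_props(2)[OF D L]] by simp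
      moreover have "card (sd_verts L) \<le> n" using card_mono[OF _ sd_verts_sub[OF L]] by simp
      ultimately show ?thesis by simp
    qed
    have finLS: "finite LS"
    proof (rule finite_subset)
      show "LS \<subseteq> Pow ({0..<n} \<times> {0..<n})" unfolding LS_def linear_subsidigraph_def by auto
    qed simp
    have img: "(\<lambda>L. card (sd_verts L) div 2) ` LS \<subseteq> {0..n div 2}"
    proof
      fix x assume "x \<in> (\<lambda>L. card (sd_verts L) div 2) ` LS"
      then obtain L where "L \<in> LS" "x = card (sd_verts L) div 2" by blast
      then show "x \<in> {0..n div 2}" using evLS[of L] div_le_mono by auto
    qed
    have "(\<Sum>L\<in>LS. g L) = (\<Sum>j = 0..n div 2. \<Sum>L\<in>{L. L \<in> LS \<and> card (sd_verts L) div 2 = j}. g L)"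
      by (rule sum.group[OF finLS finite_atLeastAtMost img, symmetric])
    also have "\<dots> = (\<Sum>j = 0..n div 2. monom ((-1) ^ j * int (lin_count n arc (2 * j))) (n - 2 * j))"
    proof (rule sum.cong[OF refl])
      fix j
      define Aj where "Aj = {L. linear_subsidigraph n arc L \<and> card (sd_verts L) = 2 * j}"
      have eqA: "{L. L \<in> LS \<and> card (sd_verts L) div 2 = j} = Aj"
        unfolding Aj_def using evLS unfolding LS_def by fastforce
      have lc: "lin_count n arc (2 * j) = card Aj" unfolding lin_count_def Aj_def ..
      have "(\<Sum>L\<in>Aj. g L) = (\<Sum>L\<in>Aj. monom ((-1::int) ^ j) (n - 2 * j))"
        by (rule sum.cong[OF refl]) (simp add: g_def Aj_def)
      also have "\<dots> = monom (\<Sum>L\<in>Aj. (-1::int) ^ j) (n - 2 * j)" by (rule monom_sum[symmetric])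
      also have "\<dots> = monom ((-1) ^ j * int (lin_count n arc (2 * j))) (n - 2 * j)"
        unfolding lc by (simp add: mult.commute)
      finally show "(\<Sum>L\<in>{L. L \<in> LS \<and> card (sd_verts L) div 2 = j}. g L) =
          monom ((-1) ^ j * int (lin_count n arc (2 * j))) (n - 2 * j)" unfolding eqA .
    qed
    finally show ?thesis .
  qed
  also have "\<dots> = monom 1 n + (\<Sum>j = 1..n div 2. monom ((-1) ^ j * int (lin_count n arc (2 * j))) (n - 2 * j))"
    by (subst sum.atLeast_Suc_atMost) (simp_all add: lin_count_0)
  finally show ?thesis unfolding A_def .
qed


end
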